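(* Let $n\ge 2$ and $k\ge 1$ be integers, and let $\mathcal{A}_n$ denote the set of Dyck $n$-paths whose terminal descent has even length and all of whose other descents to ground level (if any) have odd length. Then there is a bijection between the paths in $\mathcal{A}_n$ having exactly $k$ returns and the Dyck $(n-1)$-paths that contain exactly $k-1$ early hills.
   Context: A Dyck $n$-path is a lattice path consisting of $n$ upsteps $U=(1,1)$ and $n$ downsteps $D=(1,-1)$ that starts and ends at height $0$ (ground level) and never goes below ground level. A descent is a maximal run of consecutive downsteps; its length is the number of downsteps in it. The terminal descent is the descent that ends at the final point of the path. A return is a downstep ending at ground level, and a descent to ground level is a descent whose last step is a return. An early hill is an occurrence of three consecutive steps $UDU$ in which the first $U$ starts at ground level. *)

theory Defs
  imports Main
begin

datatype step = U | D

definition stepval :: "step \<Rightarrow> int" where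
  "stepval s = (if s = U then 1 else -1)"

definition height :: "step list \<Rightarrow> int" where
  "height p = sum_list (map stepval p)"

definition dyck :: "nat \<Rightarrow> step list \<Rightarrow> bool" where
  "dyck n p \<longleftrightarrow> length (filter (\<lambda>s. s = U) p) = n \<and> length (filter (\<lambda>s. s = D) p) = n
     \<and> (\<forall>i \<le> length p. height (take i p) \<ge> 0) \<and> height p = 0"

definition dyck_paths :: "nat \<Rightarrow> step list set" where
  "dyck_paths n = {p. dyck n p}"

text \<open>A descent: maximal run of downsteps occupying positions i, ..., j-1 (0-based),
  so it starts at the point after i steps and ends at the point after j steps;
  its length is j - i.\<close>
definition is_descent :: "step list \<Rightarrow> nat \<Rightarrow> nat \<Rightarrow> bool" where
  "is_descent p i j \<longleftrightarrow> i < j \<and> j \<le> length p \<and> (\<forall>k. i \<le> k \<and> k < j \<longrightarrow> p ! k = D)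
     \<and> (i = 0 \<or> p ! (i - 1) = U) \<and> (j = length p \<or> p ! j = U)"

definition is_ground_descent :: "step list \<Rightarrow> nat \<Rightarrow> nat \<Rightarrow> bool" where
  "is_ground_descent p i j \<longleftrightarrow> is_descent p i j \<and> height (take j p) = 0"

definition returns :: "step list \<Rightarrow> nat" where
  "returns p = card {i. i < length p \<and> p ! i = D \<and> height (take (Suc i) p) = 0}"

definition early_hills :: "step list \<Rightarrow> nat" where
  "early_hills p = card {i. i + 2 < length p \<and> p ! i = U \<and> p ! (i+1) = D \<and> p ! (i+2) = U
                             \<and> height (take i p) = 0}"

definition A_set :: "nat \<Rightarrow> step list set" where
  "A_set n = {p. dyck n p \<and>
      (\<forall>i. is_descent p i (length p) \<longrightarrow> even (length p - i)) \<and>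
      (\<forall>i j. is_ground_descent p i j \<and> j < length p \<longrightarrow> odd (j - i))}"

end

theory Submission
  imports Defs
begin


datatype bt = Leaf | Br bt bt

fun enc :: "bt \<Rightarrow> step list" where
  "enc Leaf = []"
| "enc (Br l r) = enc l @ U # enc r @ [D]"

definition encL :: "bt list \<Rightarrow> step list" where
  "encL rs = concat (map (\<lambda>r. U # enc r @ [D]) rs)"

fun td :: "bt \<Rightarrow> nat" where
  "td Leaf = 0"
| "td (Br l r) = Suc (td r)"

fun nn :: "int \<Rightarrow> step list \<Rightarrow> bool" where
  "nn h [] = (0 \<le> h)"
| "nn h (x # xs) = (0 \<le> h \<and> nn (h + stepval x) xs)"

lemma height_Nil[simp]: "height [] = 0" by (simp add: height_def)
lemma height_Cons[simp]: "height (x # xs) = stepval x + height xs" by (simp add: height_def)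
lemma height_append[simp]: "height (xs @ ys) = height xs + height ys" by (simp add: height_def)
lemma stepval_simps[simp]: "stepval U = 1" "stepval D = -1" by (simp_all add: stepval_def)

lemma all_le_Suc: "(\<forall>i \<le> Suc n. P i) \<longleftrightarrow> P 0 \<and> (\<forall>i \<le> n. P (Suc i))"
  by (metis Suc_le_mono le0 not0_implies_Suc)

lemma nn_iff: "nn h p \<longleftrightarrow> (\<forall>i \<le> length p. 0 \<le> h + height (take i p))"
proof (induction p arbitrary: h)
  case Nil then show ?case by simp
next
  case (Cons x p)
  show ?case by (simp only: length_Cons all_le_Suc Cons.IH nn.simps) (simp add: add.assoc)
qed

lemma nn_ge0: "nn h xs \<Longrightarrow> 0 \<le> h"
  by (cases xs) auto

lemma nn_append: "nn h (xs @ ys) \<longleftrightarrow> nn h xs \<and> nn (h + height xs) ys"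
  by (induction xs arbitrary: h) (auto simp: add.assoc dest: nn_ge0)

lemma nn_mono: "nn h xs \<Longrightarrow> h \<le> h' \<Longrightarrow> nn h' xs"
proof (induction xs arbitrary: h h')
  case (Cons a xs)
  then show ?case by (simp, meson add_right_mono order_trans)
qed simp

lemma height_enc[simp]: "height (enc t) = 0"
  by (induction t) auto

lemma nn_enc: "0 \<le> h \<Longrightarrow> nn h (enc t)"
  by (induction t arbitrary: h) (auto simp: nn_append)

lemma length_enc: "length (enc t) = 2 * size t"
  by (induction t) auto

fun app :: "bt \<Rightarrow> bt \<Rightarrow> bt" where
  "app c Leaf = c"
| "app c (Br l r) = Br (app c l) r"

lemma app_Leaf[simp]: "app Leaf t = t" by (induction t) auto

fun parse :: "bt list \<Rightarrow> step list \<Rightarrow> bt list" where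
  "parse st [] = st"
| "parse st (U # p) = parse (Leaf # st) p"
| "parse (b2 # b1 # st) (D # p) = parse (Br b1 b2 # st) p"
| "parse st (D # p) = st"

lemma parse_enc: "parse (c # st) (enc t @ p) = parse (app c t # st) p"
  by (induction t arbitrary: c st p) auto

lemma enc_inj: "enc a = enc b \<Longrightarrow> a = b"
  using parse_enc[of Leaf "[]" a "[]"] parse_enc[of Leaf "[]" b "[]"] by simp

fun Wr :: "bt list \<Rightarrow> step list" where
  "Wr [] = []"
| "Wr [b] = enc b"
| "Wr (b # c # bs) = Wr (c # bs) @ U # enc b"

lemma decomp: "nn 0 p \<Longrightarrow> height p = int h \<Longrightarrow> \<exists>bs. length bs = Suc h \<and> p = Wr bs"
proof (induction p arbitrary: h rule: rev_induct)
  case Nil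
  then show ?case by (intro exI[of _ "[Leaf]"]) auto
next
  case (snoc x p)
  from snoc.prems have nnp: "nn 0 p" and hp: "0 \<le> height p + stepval x"
    by (auto simp: nn_append)
  have hp0: "0 \<le> height p" using nnp nn_iff[THEN iffD1, rule_format, of 0 p "length p"] by simp
  show ?case
  proof (cases x)
    case U
    with snoc.prems hp0 obtain h' where h': "h = Suc h'" "height p = int h'"
      by (cases h) auto
    from snoc.IH[OF nnp h'(2)] obtain bs where bs: "length bs = Suc h'" "p = Wr bs" by blast
    then obtain c cs where "bs = c # cs" by (cases bs) auto
    then show ?thesis using bs U h' by (intro exI[of _ "Leaf # bs"]) auto
  next
    case D
    with snoc.prems have "height p = int (Suc h)" by auto
    from snoc.IH[OF nnp this] obtain bs where bs: "length bs = Suc (Suc h)" "p = Wr bs" by blast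
    then obtain b2 b1 bs' where bs': "bs = b2 # b1 # bs'" by (metis length_Suc_conv)
    show ?thesis
    proof (cases bs')
      case Nil
      then show ?thesis using bs bs' D by (intro exI[of _ "[Br b1 b2]"]) auto
    next
      case (Cons c cs)
      then show ?thesis using bs bs' D by (intro exI[of _ "Br b1 b2 # bs'"]) auto
    qed
  qed
qed

lemma bal_enc: "nn 0 p \<Longrightarrow> height p = 0 \<Longrightarrow> \<exists>t. p = enc t"
  using decomp[of p 0] by (auto simp: length_Suc_conv)

fun spine :: "bt \<Rightarrow> bt list" where
  "spine Leaf = []"
| "spine (Br l r) = spine l @ [r]"

lemma encL_simps[simp]: "encL [] = []" "encL (r # rs) = U # enc r @ D # encL rs"
  "encL (xs @ ys) = encL xs @ encL ys"
  by (auto simp: encL_def)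

lemma enc_spine: "enc t = encL (spine t)"
  by (induction t) auto

lemma enc_foldl: "enc (foldl Br t rs) = enc t @ encL rs"
  by (induction rs arbitrary: t) auto

lemma spine_foldl: "spine (foldl Br t rs) = spine t @ rs"
  by (induction rs arbitrary: t) auto

lemma encL_inj: "encL a = encL b \<Longrightarrow> a = b"
  using enc_foldl[of Leaf a] enc_foldl[of Leaf b] spine_foldl[of Leaf a] spine_foldl[of Leaf b]
  by (metis enc.simps(1) enc_inj self_append_conv2 spine.simps(1))

lemma bal_encL: "nn 0 p \<Longrightarrow> height p = 0 \<Longrightarrow> \<exists>rs. p = encL rs"
  using bal_enc enc_spine by blast

lemma height_encL[simp]: "height (encL rs) = 0"
  by (induction rs) auto

lemma nn_encL: "0 \<le> h \<Longrightarrow> nn h (encL rs)"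
  by (induction rs arbitrary: h) (auto simp: nn_append nn_enc)

definition wt :: "bt list \<Rightarrow> nat" where
  "wt rs = sum_list (map (\<lambda>r. size r + 1) rs)"

lemma length_encL: "length (encL rs) = 2 * wt rs"
  by (induction rs) (auto simp: wt_def length_enc)




lemma card_Suc_split:
  "card {i. i < Suc m \<and> Q i} = (if Q 0 then 1 else 0) + card {i. i < m \<and> Q (Suc i)}"
proof -
  have e: "{i. i < Suc m \<and> Q i} = {i. i = 0 \<and> Q 0} \<union> Suc ` {i. i < m \<and> Q (Suc i)}"
    by (auto simp: less_Suc_eq_0_disj)
  have "card ({i. i = 0 \<and> Q 0} \<union> Suc ` {i. i < m \<and> Q (Suc i)})
        = card {i::nat. i = 0 \<and> Q 0} + card (Suc ` {i. i < m \<and> Q (Suc i)})"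
    by (subst card_Un_disjoint) auto
  also have "card (Suc ` {i. i < m \<and> Q (Suc i)}) = card {i. i < m \<and> Q (Suc i)}"
    by (rule card_image) auto
  also have "card {i::nat. i = 0 \<and> Q 0} = (if Q 0 then 1 else 0)" by auto
  finally show ?thesis using e by simp
qed

definition RR :: "int \<Rightarrow> step list \<Rightarrow> nat" where
  "RR h p = card {i. i < length p \<and> p ! i = D \<and> h + height (take (Suc i) p) = 0}"

lemma RR_Nil[simp]: "RR h [] = 0" by (simp add: RR_def)

lemma RR_Cons: "RR h (x # p) = (if x = D \<and> h + stepval x = 0 then 1 else 0) + RR (h + stepval x) p"
  unfolding RR_def by (simp only: length_Cons card_Suc_split) (simp add: add.assoc)

lemma RR_skip: "nn (h - 1) xs \<Longrightarrow> RR h (xs @ ys) = RR (h + height xs) ys"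
proof (induction xs arbitrary: h)
  case Nil then show ?case by simp
next
  case (Cons x xs)
  have "nn (h + stepval x - 1) xs" using Cons.prems by (simp add: algebra_simps)
  moreover have "h - 1 + stepval x \<ge> 0" using Cons.prems by (cases xs) auto
  ultimately show ?case using Cons.IH[of "h + stepval x"] by (auto simp: RR_Cons add.assoc)
qed

lemma returns_encL: "returns (encL rs) = length rs"
proof -
  have "RR 0 (encL rs) = length rs"
  proof (induction rs)
    case (Cons r rs)
    have "RR 0 (encL (r # rs)) = RR 1 (enc r @ D # encL rs)" by (simp add: RR_Cons)
    also have "\<dots> = RR 1 (D # encL rs)" by (subst RR_skip) (auto simp: nn_enc)
    also have "\<dots> = 1 + RR 0 (encL rs)" by (simp add: RR_Cons)
    finally show ?case using Cons by simp
  qed simp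
  then show ?thesis by (simp add: returns_def RR_def)
qed

definition EH :: "int \<Rightarrow> step list \<Rightarrow> nat" where
  "EH h p = card {i. i < length p \<and> (i + 2 < length p \<and> p ! i = U \<and> p ! (i+1) = D \<and> p ! (i+2) = U
                             \<and> h + height (take i p) = 0)}"

lemma EH_Nil[simp]: "EH h [] = 0" by (simp add: EH_def)

lemma EH_Cons: "EH h (x # p) = (if x = U \<and> 1 < length p \<and> p ! 0 = D \<and> p ! 1 = U \<and> h = 0 then 1 else 0)
   + EH (h + stepval x) p"
  unfolding EH_def by (simp only: length_Cons card_Suc_split) (simp add: add.assoc numeral_2_eq_2)

lemma EH_skip: "nn (h - 1) xs \<Longrightarrow> EH h (xs @ ys) = EH (h + height xs) ys"
proof (induction xs arbitrary: h)
  case Nil then show ?case by simp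
next
  case (Cons x xs)
  have "nn (h + stepval x - 1) xs" using Cons.prems by (simp add: algebra_simps)
  moreover have "h \<noteq> 0" using Cons.prems by auto
  ultimately show ?case using Cons.IH[of "h + stepval x"] by (auto simp: EH_Cons add.assoc)
qed

lemma enc_hd: "t \<noteq> Leaf \<Longrightarrow> \<exists>q. enc t = U # q"
proof (induction t)
  case (Br l r)
  then show ?case by (cases "l = Leaf") auto
qed simp

lemma enc_Leaf_iff: "enc t = [] \<longleftrightarrow> t = Leaf"
  using enc_hd by (cases t) auto

lemma encL_Nil_iff: "encL rs = [] \<longleftrightarrow> rs = []"
  by (cases rs) auto

fun cntL :: "bt list \<Rightarrow> nat" where
  "cntL [] = 0"
| "cntL (s # ss) = (if s = Leaf \<and> ss \<noteq> [] then 1 else 0) + cntL ss"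

lemma cntL_eq: "cntL ss = length (filter (\<lambda>s. s = Leaf) (butlast ss))"
  by (induction ss) auto

lemma early_hills_encL: "early_hills (encL ss) = cntL ss"
proof -
  have "EH 0 (encL ss) = cntL ss"
  proof (induction ss)
    case (Cons s ss)
    have c: "(1 < length (enc s @ D # encL ss) \<and> (enc s @ D # encL ss) ! 0 = D
              \<and> (enc s @ D # encL ss) ! 1 = U) \<longleftrightarrow> (s = Leaf \<and> ss \<noteq> [])"
    proof (cases "s = Leaf")
      case True
      then show ?thesis by (cases ss) auto
    next
      case False
      then obtain q where "enc s = U # q" using enc_hd by blast
      then show ?thesis using False by auto
    qed
    have "EH 0 (encL (s # ss)) = (if s = Leaf \<and> ss \<noteq> [] then 1 else 0) + EH 1 (enc s @ D # encL ss)"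
      using c by (simp add: EH_Cons)
    also have "EH 1 (enc s @ D # encL ss) = EH 1 (D # encL ss)" by (subst EH_skip) (auto simp: nn_enc)
    also have "\<dots> = EH 0 (encL ss)" by (simp add: EH_Cons)
    finally show ?case using Cons by simp
  qed simp
  moreover have "early_hills (encL ss) = EH 0 (encL ss)"
    unfolding early_hills_def EH_def by (rule arg_cong[where f=card]) auto
  ultimately show ?thesis by simp
qed

lemma count_height: "int (length (filter (\<lambda>s. s = U) p)) - int (length (filter (\<lambda>s. s = D) p)) = height p"
  by (induction p) (auto, (case_tac a; simp)+)

lemma count_len: "length (filter (\<lambda>s. s = U) p) + length (filter (\<lambda>s. s = D) p) = length p"
  by (induction p) (auto, (case_tac a; simp)+)

lemma dyck_iff: "dyck n p \<longleftrightarrow> nn 0 p \<and> height p = 0 \<and> length p = 2 * n"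
  unfolding dyck_def nn_iff using count_height[of p] count_len[of p] by auto

lemma dyck_encL: "dyck n p \<longleftrightarrow> (\<exists>rs. p = encL rs \<and> wt rs = n)"
  unfolding dyck_iff using bal_encL nn_encL length_encL by fastforce




definition tdl :: "step list \<Rightarrow> nat" where
  "tdl q = length (takeWhile (\<lambda>s. s = D) (rev q))"

lemma tdl_le: "tdl q \<le> length q"
  unfolding tdl_def by (metis length_rev length_takeWhile_le)

lemma tdl_F1:
  assumes "j \<le> length p" "k < j" "j - tdl (take j p) \<le> k"
  shows "p ! k = D"
proof -
  let ?q = "take j p"
  have lq: "length ?q = j" using assms by simp
  have m: "j - Suc k < length (takeWhile (\<lambda>s. s = D) (rev ?q))"
    using assms unfolding tdl_def by linarith
  then have "rev ?q ! (j - Suc k) = D"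
    by (metis (mono_tags) nth_mem set_takeWhileD takeWhile_nth)
  moreover have "rev ?q ! (j - Suc k) = ?q ! k"
    using assms lq by (subst rev_nth) (auto simp: Suc_diff_Suc)
  ultimately show ?thesis using assms by simp
qed

lemma tdl_F2:
  assumes "j \<le> length p" "tdl (take j p) < j"
  shows "p ! (j - tdl (take j p) - 1) \<noteq> D"
proof -
  let ?q = "take j p"
  let ?t = "tdl ?q"
  have lq: "length ?q = j" using assms by simp
  have "length (takeWhile (\<lambda>s. s = D) (rev ?q)) < length (rev ?q)"
    using assms lq unfolding tdl_def by simp
  from nth_length_takeWhile[OF this] have "rev ?q ! ?t \<noteq> D" unfolding tdl_def by simp
  moreover have "rev ?q ! ?t = ?q ! (j - ?t - 1)"
    using assms lq by (subst rev_nth) auto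
  ultimately show ?thesis using assms by simp
qed

lemma tdl_F3:
  assumes "j \<le> length p" "i \<le> j" "\<forall>k. i \<le> k \<and> k < j \<longrightarrow> p ! k = D"
  shows "j - i \<le> tdl (take j p)"
proof -
  let ?q = "take j p"
  have lq: "length ?q = j" using assms by simp
  have "j - i \<le> length (takeWhile (\<lambda>s. s = D) (rev ?q))"
  proof (rule length_takeWhile_less_P_nth)
    fix m assume m: "m < j - i"
    have "rev ?q ! m = ?q ! (j - Suc m)" using m lq by (subst rev_nth) auto
    also have "\<dots> = p ! (j - Suc m)" using m by simp
    also have "\<dots> = D" using assms m by auto
    finally show "rev ?q ! m = D" .
  qed (use lq in simp)
  then show ?thesis unfolding tdl_def .
qed

lemma desc_iff: "is_descent p i j \<longleftrightarrow>
   (j \<le> length p \<and> (j = length p \<or> p ! j = U) \<and> 0 < tdl (take j p) \<and> i = j - tdl (take j p))"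
proof
  assume d: "is_descent p i j"
  then have j: "j \<le> length p" "i < j" "\<forall>k. i \<le> k \<and> k < j \<longrightarrow> p ! k = D"
    "i = 0 \<or> p ! (i - 1) = U" "j = length p \<or> p ! j = U"
    unfolding is_descent_def by auto
  have t3: "j - i \<le> tdl (take j p)" using tdl_F3[of j p i] j by auto
  have tj: "tdl (take j p) \<le> j" using tdl_le[of "take j p"] j by simp
  have "i = j - tdl (take j p)"
  proof (rule ccontr)
    assume "i \<noteq> j - tdl (take j p)"
    then have "j - tdl (take j p) < i" using t3 by linarith
    then have "i \<noteq> 0" "p ! (i - 1) = D" using tdl_F1[of j p "i - 1"] j by auto
    then show False using j(4) by simp
  qed
  then show "j \<le> length p \<and> (j = length p \<or> p ! j = U) \<and> 0 < tdl (take j p) \<and> i = j - tdl (take j p)"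
    using j t3 by auto
next
  assume a: "j \<le> length p \<and> (j = length p \<or> p ! j = U) \<and> 0 < tdl (take j p) \<and> i = j - tdl (take j p)"
  have tj: "tdl (take j p) \<le> j" using tdl_le[of "take j p"] a by simp
  show "is_descent p i j"
    unfolding is_descent_def
  proof (intro conjI allI impI)
    show "i < j" using a tj by auto
    show "j \<le> length p" using a by simp
    show "j = length p \<or> p ! j = U" using a by simp
    fix k assume "i \<le> k \<and> k < j" then show "p ! k = D" using tdl_F1[of j p k] a by auto
  next
    show "i = 0 \<or> p ! (i - 1) = U"
    proof (cases "tdl (take j p) < j")
      case True
      then have "p ! (i - 1) \<noteq> D" using tdl_F2[of j p] a by auto
      then show ?thesis by (cases "p ! (i - 1)") auto
    next
      case False then show ?thesis using a tj by auto
    qed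
  qed
qed

lemma tdl_Nil[simp]: "tdl [] = 0" by (simp add: tdl_def)
lemma tdl_snocD[simp]: "tdl (xs @ [D]) = Suc (tdl xs)" by (simp add: tdl_def)
lemma tdl_U: "U \<in> set ys \<Longrightarrow> tdl (xs @ ys) = tdl ys"
  unfolding tdl_def by simp
lemma tdl_U1[simp]: "tdl (xs @ [U]) = 0" by (simp add: tdl_def)

lemma U_in_enc: "t \<noteq> Leaf \<Longrightarrow> U \<in> set (enc t)"
  using enc_hd by fastforce

lemma tdl_U_enc: "tdl (xs @ U # enc r) = td r"
proof (cases "r = Leaf")
  case True then show ?thesis by simp
next
  case False
  then have "tdl (xs @ U # enc r) = tdl (enc r)"
    using tdl_U[of "enc r" "xs @ [U]"] U_in_enc by simp
  moreover have "tdl (enc r) = td r"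
  proof (induction r)
    case (Br l r)
    have "tdl (enc l @ U # enc r) = td r"
    proof (cases "r = Leaf")
      case True then show ?thesis by simp
    next
      case False
      then show ?thesis using tdl_U[of "enc r" "enc l @ [U]"] U_in_enc Br.IH(2) by simp
    qed
    then show ?case using tdl_snocD[of "enc l @ U # enc r"] by simp
  qed simp
  ultimately show ?thesis by simp
qed

lemma tdl_encL_snoc: "tdl (encL (xs @ [r])) = Suc (td r)"
  using tdl_snocD[of "encL xs @ U # enc r"] tdl_U_enc[of "encL xs" r] by simp

lemma tdl_encL: "rs \<noteq> [] \<Longrightarrow> tdl (encL rs) = Suc (td (last rs))"
  by (metis append_butlast_last_id tdl_encL_snoc)

lemma C1_iff:
  assumes "rs \<noteq> []"
  shows "(\<forall>i. is_descent (encL rs) i (length (encL rs)) \<longrightarrow> even (length (encL rs) - i))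
         \<longleftrightarrow> odd (td (last rs))"
proof -
  let ?p = "encL rs"
  have t: "tdl ?p = Suc (td (last rs))" using tdl_encL[OF assms] .
  have le: "tdl ?p \<le> length ?p" by (rule tdl_le)
  have "is_descent ?p i (length ?p) \<longleftrightarrow> i = length ?p - tdl ?p" for i
    using t by (simp add: desc_iff)
  then show ?thesis using t le by auto
qed

lemma BND: "j \<le> length (encL rs) \<Longrightarrow> height (take j (encL rs)) = 0
   \<Longrightarrow> \<exists>m \<le> length rs. take j (encL rs) = encL (take m rs)"
proof (induction rs arbitrary: j)
  case Nil then show ?case by simp
next
  case (Cons r rs)
  let ?a = "length (enc r)"
  show ?case
  proof (cases j)
    case 0 then show ?thesis by (intro exI[of _ 0]) simp
  next
    case (Suc j')
    consider "j' \<le> ?a" | "j' = Suc ?a" | j'' where "j' = Suc ?a + j''" "j'' > 0"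
      by (metis add_Suc less_add_Suc1 linorder_not_le nat_le_iff_add not_less_eq_eq
          Nat.add_0_right not_gr_zero)
    then show ?thesis
    proof cases
      case 1
      then have "take j (encL (r # rs)) = U # take j' (enc r)" using Suc by simp
      moreover have "0 \<le> height (take j' (enc r))"
        using nn_enc[of 0 r] 1 by (simp add: nn_iff)
      ultimately show ?thesis using Cons.prems by simp
    next
      case 2
      then have "take j (encL (r # rs)) = encL (take 1 (r # rs))" using Suc by simp
      then show ?thesis by (intro exI[of _ 1]) simp
    next
      case 3
      then have e: "take j (encL (r # rs)) = U # enc r @ D # take j'' (encL rs)" using Suc
        by (simp add: take_Cons')
      then have "height (take j'' (encL rs)) = 0" using Cons.prems by simp
      moreover have "j'' \<le> length (encL rs)" using Cons.prems Suc 3 by simp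
      ultimately obtain m where "m \<le> length rs" "take j'' (encL rs) = encL (take m rs)"
        using Cons.IH by blast
      then show ?thesis using e by (intro exI[of _ "Suc m"]) simp
    qed
  qed
qed

lemma encL_hd: "rs \<noteq> [] \<Longrightarrow> encL rs ! 0 = U"
  by (cases rs) auto

lemma C2_iff:
  assumes "rs \<noteq> []"
  shows "(\<forall>i j. is_ground_descent (encL rs) i j \<and> j < length (encL rs) \<longrightarrow> odd (j - i))
         \<longleftrightarrow> (\<forall>r \<in> set (butlast rs). even (td r))"
proof
  assume H: "\<forall>i j. is_ground_descent (encL rs) i j \<and> j < length (encL rs) \<longrightarrow> odd (j - i)"
  show "\<forall>r \<in> set (butlast rs). even (td r)"
  proof
    fix r assume "r \<in> set (butlast rs)"
    then obtain as bs where ab: "butlast rs = as @ r # bs" by (meson split_list)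
    let ?A = "as @ [r]" and ?B = "bs @ [last rs]"
    have rs: "rs = ?A @ ?B" using ab assms by (metis append.assoc append_Cons append_Nil append_butlast_last_id)
    let ?p = "encL rs" and ?j = "length (encL ?A)"
    have p: "?p = encL ?A @ encL ?B" using rs by (metis encL_simps(3))
    have tk: "take ?j ?p = encL ?A" using p by simp
    have tt: "tdl (encL ?A) = Suc (td r)" by (rule tdl_encL_snoc)
    have tle: "tdl (encL ?A) \<le> ?j" by (rule tdl_le)
    have pj: "?p ! ?j = U" using p encL_hd[of ?B] by (simp add: nth_append)
    have lB: "length (encL ?B) > 0" by (simp)
    have "is_ground_descent ?p (?j - Suc (td r)) ?j"
      unfolding is_ground_descent_def using p tk tt pj by (simp add: desc_iff)
    moreover have "?j < length ?p" using p lB by simp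
    ultimately have "odd (?j - (?j - Suc (td r)))" using H by blast
    moreover have "?j - (?j - Suc (td r)) = Suc (td r)" using tt tle by (metis diff_diff_cancel)
    ultimately have "odd (Suc (td r))" by metis
    then show "even (td r)" by simp
  qed
next
  assume H: "\<forall>r \<in> set (butlast rs). even (td r)"
  show "\<forall>i j. is_ground_descent (encL rs) i j \<and> j < length (encL rs) \<longrightarrow> odd (j - i)"
  proof (intro allI impI)
    fix i j assume a: "is_ground_descent (encL rs) i j \<and> j < length (encL rs)"
    let ?p = "encL rs"
    have d: "j \<le> length ?p" "0 < tdl (take j ?p)" "i = j - tdl (take j ?p)"
      using a unfolding is_ground_descent_def desc_iff by auto
    have h: "height (take j ?p) = 0" using a unfolding is_ground_descent_def by simp
    obtain m where m: "m \<le> length rs" "take j ?p = encL (take m rs)" using BND[OF d(1) h] by blast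
    have "m \<noteq> 0" proof assume "m = 0" then have "take j ?p = []" using m by simp
      then show False using d(2) by (metis less_irrefl tdl_Nil) qed
    have "m \<noteq> length rs"
    proof
      assume "m = length rs"
      then have "take j ?p = ?p" using m by simp
      then have "length (take j ?p) = length ?p" by simp
      then show False using a by simp
    qed
    then have ml: "m - 1 < length rs - 1" using m \<open>m \<noteq> 0\<close> by linarith
    have tm: "take m rs = take (m - 1) rs @ [rs ! (m - 1)]"
      using \<open>m \<noteq> 0\<close> ml take_Suc_conv_app_nth[of "m - 1" rs] by simp
    have "tdl (take j ?p) = Suc (td (rs ! (m - 1)))" using m(2) tm tdl_encL_snoc by simp
    moreover have "rs ! (m - 1) \<in> set (butlast rs)" using ml by (metis length_butlast nth_butlast nth_mem)
    moreover have "tdl (take j ?p) \<le> j" using tdl_le[of "take j ?p"] d by simp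
    ultimately show "odd (j - i)" using H d by auto
  qed
qed




fun phi :: "bt \<Rightarrow> bt list" where
  "phi Leaf = []"
| "phi (Br a Leaf) = []"
| "phi (Br a (Br b q)) = Br a b # phi q"

fun psi :: "bt list \<Rightarrow> bt" where
  "psi [] = Leaf"
| "psi (Leaf # ys) = Leaf"
| "psi (Br a b # ys) = Br a (Br b (psi ys))"

lemma psi_phi: "even (td r) \<Longrightarrow> psi (phi r) = r"
  by (induction r rule: phi.induct) auto

lemma Leaf_phi: "Leaf \<notin> set (phi r)"
  by (induction r rule: phi.induct) auto

lemma phi_psi: "Leaf \<notin> set xs \<Longrightarrow> phi (psi xs) = xs"
  by (induction xs rule: psi.induct) auto

lemma td_psi: "Leaf \<notin> set xs \<Longrightarrow> even (td (psi xs))"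
  by (induction xs rule: psi.induct) auto

lemma wt_Nil[simp]: "wt [] = 0" and wt_Cons[simp]: "wt (x # xs) = size x + 1 + wt xs"
  and wt_append[simp]: "wt (xs @ ys) = wt xs + wt ys"
  by (auto simp: wt_def)

lemma size_psi: "Leaf \<notin> set xs \<Longrightarrow> size (psi xs) = wt xs"
  by (induction xs rule: psi.induct) auto

lemma wt_phi: "even (td r) \<Longrightarrow> wt (phi r) = size r"
  by (induction r rule: phi.induct) auto

fun join :: "bt list list \<Rightarrow> bt list" where
  "join [] = []"
| "join [x] = x"
| "join (x # y # xs) = x @ Leaf # join (y # xs)"

fun segs :: "bt list \<Rightarrow> bt list list" where
  "segs [] = [[]]"
| "segs (x # xs) = (if x = Leaf then [] # segs xs else (x # hd (segs xs)) # tl (segs xs))"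

lemma segs_ne[simp]: "segs xs \<noteq> []"
  by (induction xs) auto

lemma join_Cons2: "join ((x # s) # ss) = x # join (s # ss)"
  by (cases ss) auto

lemma join_segs: "join (segs xs) = xs"
proof (induction xs)
  case (Cons x xs)
  obtain s ss where s: "segs xs = s # ss" using segs_ne by (metis list.exhaust)
  show ?case
  proof (cases "x = Leaf")
    case True then show ?thesis using Cons s by simp
  next
    case False then show ?thesis using Cons s by (simp add: join_Cons2)
  qed
qed simp

lemma segs_Leaf: "s \<in> set (segs xs) \<Longrightarrow> Leaf \<notin> set s"
proof (induction xs arbitrary: s)
  case (Cons x xs)
  obtain t ts where t: "segs xs = t # ts" using segs_ne by (metis list.exhaust)
  then show ?case using Cons by (auto split: if_splits)
qed simp

lemma length_segs: "length (segs xs) = Suc (length (filter (\<lambda>s. s = Leaf) xs))"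
proof (induction xs)
  case (Cons x xs)
  obtain t ts where t: "segs xs = t # ts" using segs_ne by (metis list.exhaust)
  then show ?case using Cons by auto
qed simp

lemma segs_app: "Leaf \<notin> set x \<Longrightarrow> segs (x @ ys) = (x @ hd (segs ys)) # tl (segs ys)"
  by (induction x) auto

lemma segs_join: "xss \<noteq> [] \<Longrightarrow> \<forall>x \<in> set xss. Leaf \<notin> set x \<Longrightarrow> segs (join xss) = xss"
proof (induction xss rule: join.induct)
  case (2 x)
  then show ?case using segs_app[of x "[]"] by simp
next
  case (3 x y xs)
  then show ?case using segs_app[of x "Leaf # join (y # xs)"] by simp
qed simp

lemma count_join: "\<forall>x \<in> set xss. Leaf \<notin> set x \<Longrightarrow>
   length (filter (\<lambda>s. s = Leaf) (join xss)) = length xss - 1"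
  by (induction xss rule: join.induct) (auto simp: filter_empty_conv)

lemma wt_join: "wt (join xss) = sum_list (map wt xss) + (length xss - 1)"
  by (induction xss rule: join.induct) auto

fun lft :: "bt \<Rightarrow> bt" where "lft Leaf = Leaf" | "lft (Br a b) = a"
fun rgt :: "bt \<Rightarrow> bt" where "rgt Leaf = Leaf" | "rgt (Br a b) = b"

definition G :: "bt list \<Rightarrow> bt list" where
  "G rs = join (map phi (butlast rs) @ [phi (rgt (last rs))]) @ [lft (last rs)]"

definition H :: "bt list \<Rightarrow> bt list" where
  "H ss = map psi (butlast (segs (butlast ss))) @ [Br (last ss) (psi (last (segs (butlast ss))))]"

definition SA :: "nat \<Rightarrow> nat \<Rightarrow> bt list set" where
  "SA n k = {rs. length rs = k \<and> wt rs = n \<and> (\<forall>r \<in> set (butlast rs). even (td r)) \<and> odd (td (last rs))}"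

definition SB :: "nat \<Rightarrow> nat \<Rightarrow> bt list set" where
  "SB n k = {ss. wt ss = n - 1 \<and> cntL ss = k - 1}"

lemma sum_wt_phi: "\<forall>r \<in> set bs. even (td r) \<Longrightarrow> sum_list (map wt (map phi bs)) + length bs = wt bs"
  by (induction bs) (auto simp: wt_phi)

lemma wt_map_psi: "\<forall>x \<in> set xs. Leaf \<notin> set x \<Longrightarrow> wt (map psi xs) = sum_list (map wt xs) + length xs"
  by (induction xs) (auto simp: size_psi)

lemma G_H_inv:
  assumes "1 \<le> k" "rs \<in> SA n k"
  shows "G rs \<in> SB n k \<and> H (G rs) = rs"
proof -
  from assms have rs: "length rs = k" "wt rs = n" "\<forall>r \<in> set (butlast rs). even (td r)" "odd (td (last rs))"
    by (auto simp: SA_def)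
  then have ne: "rs \<noteq> []" using assms by auto
  obtain bs where bs: "bs = butlast rs" by blast
  obtain P Q where PQ: "last rs = Br P Q" using rs(4) by (cases "last rs") auto
  have rsbs: "rs = bs @ [Br P Q]" using bs PQ ne by (metis append_butlast_last_id)
  have eQ: "even (td Q)" using rs(4) PQ by simp
  let ?xss = "map phi bs @ [phi Q]"
  have lf: "\<forall>x \<in> set ?xss. Leaf \<notin> set x" using Leaf_phi by auto
  have Gr: "G rs = join ?xss @ [P]" unfolding G_def using bs PQ by simp
  have cnt: "cntL (G rs) = k - 1"
    using Gr count_join[OF lf] rs(1) rsbs by (simp add: cntL_eq)
  have ebs: "\<forall>r \<in> set bs. even (td r)" using rs(3) bs by simp
  have "wt (G rs) = wt (join ?xss) + size P + 1" using Gr by simp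
  also have "\<dots> = sum_list (map wt (map phi bs)) + size Q + length bs + size P + 1"
    using wt_join[of ?xss] wt_phi[OF eQ] by simp
  also have "\<dots> = wt bs + size Q + size P + 1" using sum_wt_phi[OF ebs] by simp
  also have "\<dots> = n - 1" using rs(2) rsbs by simp
  finally have wG: "wt (G rs) = n - 1" .
  have "H (G rs) = map psi (butlast ?xss) @ [Br P (psi (last ?xss))]"
    unfolding H_def using Gr segs_join[OF _ lf] by simp
  also have "\<dots> = rs" using rsbs psi_phi eQ ebs by (simp add: map_idI)
  finally show ?thesis using cnt wG by (simp add: SB_def)
qed

lemma H_G_inv:
  assumes "2 \<le> n" "1 \<le> k" "ss \<in> SB n k"
  shows "H ss \<in> SA n k \<and> G (H ss) = ss"
proof -
  from assms have ss: "wt ss = n - 1" "cntL ss = k - 1" by (auto simp: SB_def)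
  then have ne: "ss \<noteq> []" using assms by auto
  obtain ys z where yz: "ys = butlast ss" "z = last ss" by blast
  have ssyz: "ss = ys @ [z]" using yz ne by simp
  let ?xss = "segs ys"
  have lf: "\<forall>x \<in> set ?xss. Leaf \<notin> set x" using segs_Leaf by blast
  obtain as a where asa: "?xss = as @ [a]" using segs_ne by (metis append_butlast_last_id)
  have Hs: "H ss = map psi as @ [Br z (psi a)]" unfolding H_def using yz asa by simp
  have lens: "length ?xss = k" using length_segs[of ys] ss(2) ssyz assms cntL_eq[of ss] by simp
  have lfa: "\<forall>x \<in> set as. Leaf \<notin> set x" "Leaf \<notin> set a" using lf asa by auto
  have j: "join ?xss = ys" by (rule join_segs)
  have "wt ys = sum_list (map wt ?xss) + (k - 1)" using wt_join[of ?xss] j lens by simp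
  have "wt (H ss) = wt (map psi as) + size z + wt a + 2" using Hs size_psi[OF lfa(2)] by simp
  also have "\<dots> = sum_list (map wt ?xss) + length ?xss + size z + 1"
    using wt_map_psi[OF lfa(1)] asa by simp
  also have "\<dots> = wt ys + size z + 2" using wt_join[of ?xss] j lens assms by simp
  also have "\<dots> = n" using ss(1) ssyz assms by simp
  finally have wH: "wt (H ss) = n" .
  have lH: "length (H ss) = k" using Hs asa lens by simp
  have eH: "\<forall>r \<in> set (butlast (H ss)). even (td r)" using Hs td_psi lfa by auto
  have oH: "odd (td (last (H ss)))" using Hs td_psi[OF lfa(2)] by simp
  have "G (H ss) = join (map phi (map psi as) @ [phi (psi a)]) @ [z]"
    unfolding G_def using Hs by simp
  also have "map phi (map psi as) = as" using lfa(1) phi_psi by (induction as) auto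
  also have "phi (psi a) = a" using lfa(2) phi_psi by simp
  finally have "G (H ss) = ss" using asa j ssyz by simp
  then show ?thesis using wH lH eH oH by (simp add: SA_def)
qed

lemma G_bij: "2 \<le> n \<Longrightarrow> 1 \<le> k \<Longrightarrow> bij_betw G (SA n k) (SB n k)"
  by (rule bij_betw_byWitness[where f' = H]) (use G_H_inv H_G_inv in blast)+

lemma LHS_eq:
  assumes "1 \<le> k"
  shows "{p \<in> A_set n. returns p = k} = encL ` SA n k"
proof (rule set_eqI, rule iffI)
  fix p assume "p \<in> {p \<in> A_set n. returns p = k}"
  then have p: "dyck n p" "\<forall>i. is_descent p i (length p) \<longrightarrow> even (length p - i)"
    "\<forall>i j. is_ground_descent p i j \<and> j < length p \<longrightarrow> odd (j - i)" "returns p = k"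
    by (auto simp: A_set_def)
  obtain rs where rs: "p = encL rs" "wt rs = n" using p(1) dyck_encL by blast
  have "length rs = k" using p(4) rs returns_encL by simp
  then have ne: "rs \<noteq> []" using assms by auto
  have "odd (td (last rs))" using C1_iff[OF ne] p(2) rs by simp
  moreover have "\<forall>r \<in> set (butlast rs). even (td r)" using C2_iff[OF ne] p(3) rs by simp
  ultimately show "p \<in> encL ` SA n k" using rs \<open>length rs = k\<close> by (auto simp: SA_def)
next
  fix p assume "p \<in> encL ` SA n k"
  then obtain rs where rs: "p = encL rs" "rs \<in> SA n k" by blast
  then have r: "length rs = k" "wt rs = n" "\<forall>r \<in> set (butlast rs). even (td r)" "odd (td (last rs))"
    by (auto simp: SA_def)
  then have ne: "rs \<noteq> []" using assms by auto
  have "dyck n p" using dyck_encL rs r by blast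
  moreover have "returns p = k" using returns_encL rs r by simp
  moreover note C1_iff[OF ne] C2_iff[OF ne]
  ultimately show "p \<in> {p \<in> A_set n. returns p = k}" using r rs by (auto simp: A_set_def)
qed

lemma RHS_eq: "{q \<in> dyck_paths (n - 1). early_hills q = k - 1} = encL ` SB n k"
  unfolding dyck_paths_def SB_def using dyck_encL early_hills_encL by fastforce

theorem theorem2:
  fixes n k :: nat
  assumes "n \<ge> 2" and "k \<ge> 1"
  shows "\<exists>f. bij_betw f {p \<in> A_set n. returns p = k}
                       {q \<in> dyck_paths (n - 1). early_hills q = k - 1}"
proof -
  have inj: "inj_on encL X" for X by (meson encL_inj inj_onI)
  have b1: "bij_betw encL (SA n k) {p \<in> A_set n. returns p = k}"
    using LHS_eq[OF assms(2)] inj by (simp add: bij_betw_def)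
  have b2: "bij_betw encL (SB n k) {q \<in> dyck_paths (n - 1). early_hills q = k - 1}"
    using RHS_eq inj by (simp add: bij_betw_def)
  have b0: "bij_betw G (SA n k) (SB n k)" using G_bij assms by simp
  have "bij_betw (encL \<circ> (G \<circ> inv_into (SA n k) encL)) {p \<in> A_set n. returns p = k}
                       {q \<in> dyck_paths (n - 1). early_hills q = k - 1}"
    by (rule bij_betw_trans[OF bij_betw_trans[OF bij_betw_inv_into[OF b1] b0] b2])
  then show ?thesis by blast
qed


end
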